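(* For integers $n,m\ge 3$, ${\rm dim}_s(K_{n,n}^{-M}\diamond K_{m,m}^{-M})=3nm$.
   Context: The modular product $G\diamond H$ has vertex set $V(G)\times V(H)$; distinct vertices $(g,h)$ and $(g',h')$ are adjacent iff ($g=g'$ and $hh'\in E(H)$), or ($gg'\in E(G)$ and $h=h'$), or ($gg'\in E(G)$ and $hh'\in E(H)$), or ($g\neq g'$, $h\neq h'$, $gg'\notin E(G)$ and $hh'\notin E(H)$). $K_{n,n}^{-M}$ is $K_{n,n}$ with a perfect matching removed. ${\rm dim}_s(X)$ is the strong metric dimension: the minimum size of $S\subseteq V(X)$ such that for all distinct $x,y$ some $z\in S$ has $d_X(y,z)=d_X(y,x)+d_X(x,z)$ or $d_X(x,z)=d_X(x,y)+d_X(y,z)$. *)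

theory Defs
  imports Main
begin

text \<open>Simple graphs are given by a vertex set V and a symmetric irreflexive
adjacency relation E (only its restriction to V matters).\<close>

fun gwalk :: "'a set \<Rightarrow> ('a \<Rightarrow> 'a \<Rightarrow> bool) \<Rightarrow> nat \<Rightarrow> 'a \<Rightarrow> 'a \<Rightarrow> bool" where
  "gwalk V E 0 x y = (x = y \<and> x \<in> V)"
| "gwalk V E (Suc k) x y = (x \<in> V \<and> (\<exists>z\<in>V. E x z \<and> gwalk V E k z y))"

text \<open>Graph distance: length of a shortest walk (graphs considered here are connected).\<close>
definition gdist :: "'a set \<Rightarrow> ('a \<Rightarrow> 'a \<Rightarrow> bool) \<Rightarrow> 'a \<Rightarrow> 'a \<Rightarrow> nat" where
  "gdist V E x y = (LEAST k. gwalk V E k x y)"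

definition strong_resolving :: "'a set \<Rightarrow> ('a \<Rightarrow> 'a \<Rightarrow> bool) \<Rightarrow> 'a set \<Rightarrow> bool" where
  "strong_resolving V E S \<longleftrightarrow> S \<subseteq> V \<and>
     (\<forall>x\<in>V. \<forall>y\<in>V. x \<noteq> y \<longrightarrow>
        (\<exists>z\<in>S. gdist V E y z = gdist V E y x + gdist V E x z
              \<or> gdist V E x z = gdist V E x y + gdist V E y z))"

definition strong_metric_dim :: "'a set \<Rightarrow> ('a \<Rightarrow> 'a \<Rightarrow> bool) \<Rightarrow> nat" where
  "strong_metric_dim V E = (LEAST k. \<exists>S. finite S \<and> strong_resolving V E S \<and> card S = k)"

definition mod_prod_edge :: "('a \<Rightarrow> 'a \<Rightarrow> bool) \<Rightarrow> ('b \<Rightarrow> 'b \<Rightarrow> bool) \<Rightarrow> ('a \<times> 'b) \<Rightarrow> ('a \<times> 'b) \<Rightarrow> bool" where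
  "mod_prod_edge EG EH p q \<longleftrightarrow> p \<noteq> q \<and>
     (let g = fst p; h = snd p; g' = fst q; h' = snd q in
        (g = g' \<and> EH h h') \<or> (EG g g' \<and> h = h') \<or> (EG g g' \<and> EH h h') \<or>
        (g \<noteq> g' \<and> h \<noteq> h' \<and> \<not> EG g g' \<and> \<not> EH h h'))"

text \<open>K_{n,n} minus a perfect matching: vertices (side, index) with index < n;
  (b,i) ~ (c,j) iff b \<noteq> c and i \<noteq> j (the matching {(False,i),(True,i)} is removed).\<close>
definition knnM_V :: "nat \<Rightarrow> (bool \<times> nat) set" where
  "knnM_V n = {(b, i). i < n}"

definition knnM_E :: "(bool \<times> nat) \<Rightarrow> (bool \<times> nat) \<Rightarrow> bool" where
  "knnM_E u v \<longleftrightarrow> fst u \<noteq> fst v \<and> snd u \<noteq> snd v"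

end

theory Submission imports Defs begin

datatype rt = Eq | Ad | Sm | Mt

fun rel :: "bool \<times> nat \<Rightarrow> bool \<times> nat \<Rightarrow> rt" where
  "rel (b,i) (c,j) = (if b = c \<and> i = j then Eq else if b \<noteq> c \<and> i \<noteq> j then Ad
     else if b = c then Sm else Mt)"

fun ft :: "rt \<Rightarrow> rt \<Rightarrow> nat" where
  "ft Eq Eq = 0" | "ft Eq Ad = 1" | "ft Eq Sm = 2" | "ft Eq Mt = 3"
| "ft Ad Eq = 1" | "ft Ad Ad = 1" | "ft Ad Sm = 2" | "ft Ad Mt = 2"
| "ft Sm Eq = 2" | "ft Sm Ad = 2" | "ft Sm Sm = 1" | "ft Sm Mt = 1"
| "ft Mt Eq = 3" | "ft Mt Ad = 2" | "ft Mt Sm = 1" | "ft Mt Mt = 1"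

definition fd :: "(bool \<times> nat) \<times> (bool \<times> nat) \<Rightarrow> (bool \<times> nat) \<times> (bool \<times> nat) \<Rightarrow> nat" where
  "fd p q = ft (rel (fst p) (fst q)) (rel (snd p) (snd q))"

abbreviation "EE \<equiv> mod_prod_edge knnM_E knnM_E"

lemma fd_simp: "fd ((a,i),(b,j)) ((c,k),(d,l)) = ft (rel (a,i) (c,k)) (rel (b,j) (d,l))"
  by (simp add: fd_def)

lemma edge_iff: "EE ((a,i),(b,j)) ((c,k),(d,l)) \<longleftrightarrow> fd ((a,i),(b,j)) ((c,k),(d,l)) = 1"
  by (auto simp: mod_prod_edge_def knnM_E_def Let_def fd_simp)

lemma fd_0: "fd ((a,i),(b,j)) ((c,k),(d,l)) = 0 \<longleftrightarrow> ((a,i),(b,j)) = ((c,k),(d,l))"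
  by (auto simp: fd_simp)

lemma fd_le3: "fd p q \<le> 3"
  by (cases p, cases q) (auto simp: fd_def)

lemma no_common: "fd ((a,i),(b,j)) ((c,k),(d,l)) = 3 \<Longrightarrow> fd ((a,i),(b,j)) ((e,s),(f,t)) = 1
   \<Longrightarrow> fd ((e,s),(f,t)) ((c,k),(d,l)) = 1 \<Longrightarrow> False"
  by (auto simp: fd_simp split: if_splits)

lemma edge_iff': "EE p q \<longleftrightarrow> fd p q = 1"
proof -
  obtain a i b j where p: "p = ((a,i),(b,j))" by (metis prod.exhaust)
  obtain c k d l where q: "q = ((c,k),(d,l))" by (metis prod.exhaust)
  show ?thesis unfolding p q by (rule edge_iff)
qed

lemma fd_0': "fd p q = 0 \<longleftrightarrow> p = q"
proof -
  obtain a i b j where p: "p = ((a,i),(b,j))" by (metis prod.exhaust)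
  obtain c k d l where q: "q = ((c,k),(d,l))" by (metis prod.exhaust)
  show ?thesis unfolding p q by (rule fd_0)
qed

lemma no_common': "fd p q = 3 \<Longrightarrow> fd p w = 1 \<Longrightarrow> fd w q = 1 \<Longrightarrow> False"
proof -
  obtain a i b j where p: "p = ((a,i),(b,j))" by (metis prod.exhaust)
  obtain c k d l where q: "q = ((c,k),(d,l))" by (metis prod.exhaust)
  obtain e s f t where w: "w = ((e,s),(f,t))" by (metis prod.exhaust)
  show "fd p q = 3 \<Longrightarrow> fd p w = 1 \<Longrightarrow> fd w q = 1 \<Longrightarrow> False" unfolding p q w by (rule no_common)
qed

lemma ex3: assumes "3 \<le> (n::nat)" shows "\<exists>x<n. x \<noteq> i \<and> x \<noteq> k"
proof (cases "i \<noteq> 0 \<and> k \<noteq> 0")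
  case True with assms show ?thesis by (intro exI[of _ 0]) auto
next
  case F1: False
  show ?thesis
  proof (cases "i \<noteq> 1 \<and> k \<noteq> 1")
    case True with assms show ?thesis by (intro exI[of _ 1]) auto
  next
    case False with F1 assms show ?thesis by (intro exI[of _ 2]) auto
  qed
qed

lemma memV: "((a,i),(b,j)) \<in> knnM_V n \<times> knnM_V m \<longleftrightarrow> i < n \<and> j < m"
  by (simp add: knnM_V_def)

lemma two_step:
  assumes "3 \<le> n" "3 \<le> m" "i < n" "k < n" "j < m" "l < m"
    and "fd ((a,i),(b,j)) ((c,k),(d,l)) = 2"
  shows "\<exists>w\<in>knnM_V n \<times> knnM_V m. fd ((a,i),(b,j)) w = 1 \<and> fd w ((c,k),(d,l)) = 1"
proof -
  obtain x where x: "x < n" "x \<noteq> i" "x \<noteq> k" using ex3 assms(1) by blast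
  obtain y where y: "y < m" "y \<noteq> j" "y \<noteq> l" using ex3 assms(2) by blast
  let ?P = "\<lambda>w. w \<in> knnM_V n \<times> knnM_V m \<and> fd ((a,i),(b,j)) w = 1 \<and> fd w ((c,k),(d,l)) = 1"
  have yy: "j \<noteq> y" "l \<noteq> y" "i \<noteq> x" "k \<noteq> x" using x y by auto
  have "?P ((a,i),(\<not>b,y)) \<or> ?P ((\<not>a,x),(b,j)) \<or> ?P ((c,k),(\<not>d,y)) \<or> ?P ((\<not>a,x),(d,l))
     \<or> ?P ((a,i),(d,y)) \<or> ?P ((c,x),(b,j))"
    using assms x y yy
    by (cases "a = c"; cases "i = k"; cases "b = d"; cases "j = l"; simp add: fd_simp knnM_V_def)
  then show ?thesis by blast
qed

lemma gwalk1: "gwalk V E (Suc 0) x y \<longleftrightarrow> x \<in> V \<and> y \<in> V \<and> E x y"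
  by auto

lemma gwalk2: "gwalk V E 2 x y \<longleftrightarrow> x \<in> V \<and> y \<in> V \<and> (\<exists>z\<in>V. E x z \<and> E z y)"
  by (auto simp: numeral_2_eq_2)

lemma gdist_eq: "gwalk V E k x y \<Longrightarrow> (\<forall>j<k. \<not> gwalk V E j x y) \<Longrightarrow> gdist V E x y = k"
  unfolding gdist_def by (rule Least_equality) (auto simp: not_less[symmetric])

lemma three_step:
  assumes "3 \<le> n" "3 \<le> m" "i < n" "k < n" "j < m" "l < m"
    and "fd ((a,i),(b,j)) ((c,k),(d,l)) = 3"
  shows "\<exists>w\<in>knnM_V n \<times> knnM_V m. fd ((a,i),(b,j)) w = 1 \<and> fd w ((c,k),(d,l)) = 2"
proof -
  obtain x where x: "x < n" "x \<noteq> i" "x \<noteq> k" using ex3 assms(1) by blast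
  obtain y where y: "y < m" "y \<noteq> j" "y \<noteq> l" using ex3 assms(2) by blast
  let ?P = "\<lambda>w. w \<in> knnM_V n \<times> knnM_V m \<and> fd ((a,i),(b,j)) w = 1 \<and> fd w ((c,k),(d,l)) = 2"
  have yy: "j \<noteq> y" "l \<noteq> y" "i \<noteq> x" "k \<noteq> x" using x y by auto
  have "?P ((\<not>a,x),(b,j)) \<or> ?P ((a,i),(\<not>b,y))"
    using assms x y yy
    by (cases "a = c"; cases "i = k"; cases "b = d"; cases "j = l"; simp add: fd_simp knnM_V_def)
  then show ?thesis by blast
qed

lemma walk2:
  assumes "3 \<le> n" "3 \<le> m" "p \<in> knnM_V n \<times> knnM_V m" "q \<in> knnM_V n \<times> knnM_V m" "fd p q = 2"
  shows "gwalk (knnM_V n \<times> knnM_V m) EE 2 p q"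
proof -
  obtain a i b j where p: "p = ((a,i),(b,j))" by (metis prod.exhaust)
  obtain c k d l where q: "q = ((c,k),(d,l))" by (metis prod.exhaust)
  have ij: "i < n" "k < n" "j < m" "l < m" using assms(3,4) unfolding p q by (auto simp: knnM_V_def)
  show ?thesis using two_step[OF assms(1,2) ij] assms(3,4,5) unfolding p q
    by (auto simp: gwalk2 edge_iff')
qed

lemma dist:
  assumes "3 \<le> n" "3 \<le> m" "p \<in> knnM_V n \<times> knnM_V m" "q \<in> knnM_V n \<times> knnM_V m"
  shows "gdist (knnM_V n \<times> knnM_V m) EE p q = fd p q"
proof -
  let ?V = "knnM_V n \<times> knnM_V m"
  obtain a i b j where p: "p = ((a,i),(b,j))" by (metis prod.exhaust)
  obtain c k d l where q: "q = ((c,k),(d,l))" by (metis prod.exhaust)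
  have ij: "i < n" "k < n" "j < m" "l < m" using assms(3,4) unfolding p q by (auto simp: knnM_V_def)
  have w0: "gwalk ?V EE 0 p q \<longleftrightarrow> fd p q = 0" using assms(3) by (auto simp: fd_0')
  have w1: "gwalk ?V EE (Suc 0) p q \<longleftrightarrow> fd p q = 1" using assms(3,4) by (auto simp: edge_iff')
  have w2: "gwalk ?V EE 2 p q \<Longrightarrow> fd p q \<noteq> 3"
  proof
    assume "gwalk ?V EE 2 p q" "fd p q = 3"
    then obtain z where "z \<in> ?V" "fd p z = 1" "fd z q = 1" by (auto simp: gwalk2 edge_iff')
    then show False using no_common'[of p q z] \<open>fd p q = 3\<close> by auto
  qed
  show ?thesis
  proof (cases "fd p q")
    case 0 then show ?thesis using w0 by (intro gdist_eq) auto
  next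
    case (Suc k1)
    show ?thesis
    proof (cases k1)
      case 0 then show ?thesis using w0 w1 Suc by (intro gdist_eq) auto
    next
      case (Suc k2)
      show ?thesis
      proof (cases k2)
        case 0 then show ?thesis using w0 w1 walk2[OF assms] Suc \<open>fd p q = Suc k1\<close>
          by (intro gdist_eq) (auto simp: less_Suc_eq numeral_2_eq_2)
      next
        case (Suc k3)
        then have f3: "fd p q = 3" using fd_le3[of p q] \<open>fd p q = Suc k1\<close> \<open>k1 = Suc k2\<close> by linarith
        have "gwalk ?V EE 3 p q"
        proof -
          obtain w where w: "w \<in> ?V" "fd p w = 1" "fd w q = 2"
            using three_step[OF assms(1,2) ij] f3 unfolding p q by blast
          have "gwalk ?V EE 2 w q" using w walk2[OF assms(1,2) w(1) assms(4)] by simp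
          then have "gwalk ?V EE (Suc 2) p q" unfolding gwalk.simps(2)
            using w assms(3) edge_iff'[of p w] by blast
          moreover have "Suc 2 = (3::nat)" by simp
          ultimately show ?thesis by metis
        qed
        then show ?thesis using w0 w1 w2 f3
          by (intro gdist_eq) (auto simp: less_Suc_eq numeral_3_eq_3 numeral_2_eq_2)
      qed
    qed
  qed
qed

definition Bl :: "nat \<times> nat \<Rightarrow> ((bool \<times> nat) \<times> (bool \<times> nat)) set" where
  "Bl ij = {((False,fst ij),(False,snd ij)), ((False,fst ij),(True,snd ij)),
            ((True,fst ij),(False,snd ij)), ((True,fst ij),(True,snd ij))}"

lemma Bl_mem: "p \<in> Bl ij \<longleftrightarrow> (snd (fst p), snd (snd p)) = ij"
proof -
  obtain a i b j where p: "p = ((a,i),(b,j))" by (metis prod.exhaust)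
  show ?thesis unfolding p Bl_def by (cases a; cases b; cases ij) auto
qed

lemma Bl_card: "card (Bl ij) = 4"
  unfolding Bl_def by simp

lemma finV: "finite (knnM_V n \<times> knnM_V m)"
proof -
  have "knnM_V k \<subseteq> UNIV \<times> {..<k}" for k by (auto simp: knnM_V_def)
  then have "finite (knnM_V k)" for k by (rule finite_subset) simp
  then show ?thesis by simp
qed

lemma card_split:
  assumes "S \<subseteq> knnM_V n \<times> knnM_V m"
  shows "card S = (\<Sum>ij\<in>{..<n}\<times>{..<m}. card (S \<inter> Bl ij))"
proof -
  have "S = \<Union>((\<lambda>ij. S \<inter> Bl ij) ` ({..<n}\<times>{..<m}))"
    using assms by (auto simp: Bl_mem knnM_V_def)
  moreover have "card (\<Union>((\<lambda>ij. S \<inter> Bl ij) ` ({..<n}\<times>{..<m}))) = (\<Sum>ij\<in>{..<n}\<times>{..<m}. card (S \<inter> Bl ij))"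
    by (rule card_UN_disjoint) (auto simp: Bl_def)
  ultimately show ?thesis by simp
qed

lemma key:
  "((a,i),(b,j)) \<noteq> ((c,i),(d,j)) \<Longrightarrow>
   fd ((c,i),(d,j)) ((e,s),(f,t)) = fd ((c,i),(d,j)) ((a,i),(b,j)) + fd ((a,i),(b,j)) ((e,s),(f,t))
   \<Longrightarrow> ((e,s),(f,t)) = ((a,i),(b,j))"
  by (cases a; cases b; cases c; cases d; cases e; cases f; cases "s = i"; cases "t = j"; simp add: fd_simp)

lemma key':
  assumes "x \<in> Bl ij" "y \<in> Bl ij" "x \<noteq> y" "fd y z = fd y x + fd x z"
  shows "z = x"
proof -
  obtain a i b j where x: "x = ((a,i),(b,j))" by (metis prod.exhaust)
  obtain c k d l where y: "y = ((c,k),(d,l))" by (metis prod.exhaust)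
  obtain e s f t where z: "z = ((e,s),(f,t))" by (metis prod.exhaust)
  have "k = i" "l = j" using assms(1,2) unfolding x y by (auto simp: Bl_mem)
  then show ?thesis using key[of a i b j c d e s f t] assms(3,4) unfolding x y z by simp
qed

lemma pair_in:
  assumes "3 \<le> n" "3 \<le> m" "strong_resolving (knnM_V n \<times> knnM_V m) EE S"
    and "x \<in> Bl ij" "y \<in> Bl ij" "x \<noteq> y" "ij \<in> {..<n}\<times>{..<m}"
  shows "x \<in> S \<or> y \<in> S"
proof -
  let ?V = "knnM_V n \<times> knnM_V m"
  have xV: "x \<in> ?V" "y \<in> ?V" using assms(4,5,7) by (auto simp: Bl_def knnM_V_def)
  have SV: "S \<subseteq> ?V" using assms(3) by (simp add: strong_resolving_def)
  obtain z where z: "z \<in> S" and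
    "gdist ?V EE y z = gdist ?V EE y x + gdist ?V EE x z
     \<or> gdist ?V EE x z = gdist ?V EE x y + gdist ?V EE y z"
    using assms(3) xV assms(6) unfolding strong_resolving_def by blast
  moreover have zV: "z \<in> ?V" using z SV by auto
  ultimately have "fd y z = fd y x + fd x z \<or> fd x z = fd x y + fd y z"
    using dist[OF assms(1,2)] xV by simp
  then have "z = x \<or> z = y"
    using key'[OF assms(4,5,6)] key'[OF assms(5,4)] assms(6) by metis
  then show ?thesis using z by auto
qed

lemma block_ge3:
  assumes "3 \<le> n" "3 \<le> m" "strong_resolving (knnM_V n \<times> knnM_V m) EE S"
    and "ij \<in> {..<n}\<times>{..<m}"
  shows "3 \<le> card (S \<inter> Bl ij)"
proof -
  have fB: "finite (Bl ij)" by (simp add: Bl_def)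
  have "card (Bl ij - S) \<le> Suc 0"
  proof -
    have "\<forall>a1\<in>Bl ij - S. \<forall>a2\<in>Bl ij - S. a1 = a2"
      using pair_in[OF assms(1,2,3) _ _ _ assms(4)] by blast
    then show ?thesis using fB by (subst card_le_Suc0_iff_eq) auto
  qed
  moreover have "card (Bl ij) \<le> card (S \<inter> Bl ij) + card (Bl ij - S)"
  proof -
    have "card (Bl ij) \<le> card ((S \<inter> Bl ij) \<union> (Bl ij - S))" using fB by (intro card_mono) auto
    also have "\<dots> \<le> card (S \<inter> Bl ij) + card (Bl ij - S)" by (rule card_Un_le)
    finally show ?thesis .
  qed
  ultimately show ?thesis using Bl_card[of ij] by linarith
qed

definition S0 :: "nat \<Rightarrow> nat \<Rightarrow> ((bool \<times> nat) \<times> (bool \<times> nat)) set" where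
  "S0 n m = {p \<in> knnM_V n \<times> knnM_V m. fst (fst p) \<or> fst (snd p)}"

lemma S0_block: "ij \<in> {..<n}\<times>{..<m} \<Longrightarrow> card (S0 n m \<inter> Bl ij) = 3"
proof -
  assume a: "ij \<in> {..<n}\<times>{..<m}"
  have "S0 n m \<inter> Bl ij = {((False,fst ij),(True,snd ij)),
            ((True,fst ij),(False,snd ij)), ((True,fst ij),(True,snd ij))}"
    using a by (auto simp: S0_def Bl_def knnM_V_def)
  then show ?thesis by simp
qed

lemma S0_card: "card (S0 n m) = 3 * n * m"
proof -
  have "card (S0 n m) = (\<Sum>ij\<in>{..<n}\<times>{..<m}. card (S0 n m \<inter> Bl ij))"
    by (rule card_split) (auto simp: S0_def)
  also have "\<dots> = (\<Sum>ij\<in>{..<n}\<times>{..<m}. 3)" by (rule sum.cong) (auto simp: S0_block)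
  also have "\<dots> = 3 * n * m" by (simp add: card_cartesian_product)
  finally show ?thesis .
qed

lemma S0_res:
  assumes "3 \<le> n" "3 \<le> m"
  shows "strong_resolving (knnM_V n \<times> knnM_V m) EE (S0 n m)"
  unfolding strong_resolving_def
proof (intro conjI ballI impI)
  let ?V = "knnM_V n \<times> knnM_V m"
  show "S0 n m \<subseteq> ?V" by (auto simp: S0_def)
  fix x y assume xV: "x \<in> ?V" and yV: "y \<in> ?V" and xy: "x \<noteq> y"
  have dd: "\<And>p q. p \<in> ?V \<Longrightarrow> q \<in> ?V \<Longrightarrow> gdist ?V EE p q = fd p q" using dist[OF assms] by blast
  show "\<exists>z\<in>S0 n m. gdist ?V EE y z = gdist ?V EE y x + gdist ?V EE x z
              \<or> gdist ?V EE x z = gdist ?V EE x y + gdist ?V EE y z"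
  proof (cases "x \<in> S0 n m")
    case True
    then show ?thesis using xV yV dd fd_0'[of x x] by (intro bexI[of _ x]) auto
  next
    case xn: False
    show ?thesis
    proof (cases "y \<in> S0 n m")
      case True
      then show ?thesis using xV yV dd fd_0'[of y y] by (intro bexI[of _ y]) auto
    next
      case yn: False
      obtain a i b j where x: "x = ((a,i),(b,j))" by (metis prod.exhaust)
      obtain c k d l where y: "y = ((c,k),(d,l))" by (metis prod.exhaust)
      have xx: "a = False" "b = False" "c = False" "d = False" "i < n" "j < m" "k < n" "l < m"
        using xn yn xV yV unfolding x y by (auto simp: S0_def knnM_V_def)
      obtain t where t: "t < m" "t \<noteq> j" "t \<noteq> l" using ex3 assms(2) by blast
      have tt: "j \<noteq> t" "l \<noteq> t" using t by auto
      let ?z1 = "((False,i),(True,l))" and ?z2 = "((True,k),(False,j))" and ?z3 = "((False,i),(True,t))"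
      have zS: "?z1 \<in> S0 n m" "?z2 \<in> S0 n m" "?z3 \<in> S0 n m" using xx t by (auto simp: S0_def knnM_V_def)
      have "fd y ?z1 = fd y x + fd x ?z1 \<or> fd y ?z2 = fd y x + fd x ?z2 \<or> fd y ?z3 = fd y x + fd x ?z3"
        using xx xy tt unfolding x y by (cases "i = k"; cases "j = l"; simp add: fd_simp)
      then show ?thesis using zS xV yV dd[of y] dd[of x] S0_def by (metis (no_types, lifting) mem_Collect_eq)
    qed
  qed
qed

theorem mainTheorem14:
  fixes n m :: nat
  assumes "n \<ge> 3" and "m \<ge> 3"
  shows "strong_metric_dim (knnM_V n \<times> knnM_V m) (mod_prod_edge knnM_E knnM_E) = 3 * n * m"
  unfolding strong_metric_dim_def
proof (rule Least_equality)
  show "\<exists>S. finite S \<and> strong_resolving (knnM_V n \<times> knnM_V m) EE S \<and> card S = 3 * n * m"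
    using S0_res[OF assms] S0_card finV
    by (intro exI[of _ "S0 n m"]) (auto simp: S0_def intro: finite_subset)
next
  fix k assume "\<exists>S. finite S \<and> strong_resolving (knnM_V n \<times> knnM_V m) EE S \<and> card S = k"
  then obtain S where S: "strong_resolving (knnM_V n \<times> knnM_V m) EE S" "card S = k" by blast
  have "card S = (\<Sum>ij\<in>{..<n}\<times>{..<m}. card (S \<inter> Bl ij))"
    using S(1) by (intro card_split) (simp add: strong_resolving_def)
  also have "\<dots> \<ge> (\<Sum>ij\<in>{..<n}\<times>{..<m}. 3)"
    by (rule sum_mono) (rule block_ge3[OF assms S(1)])
  finally show "3 * n * m \<le> k" using S(2) by (simp add: card_cartesian_product)
qed

end
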